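(* Let $f:\mathbb{R}^n\to\mathbb{R}$ be a continuously differentiable convex function. Let $H$ be a diagonal matrix with nonnegative diagonal entries such that $f(y)\le f(x)+\nabla f(x)^T(y-x)+\tfrac12\|y-x\|_H^2$ for all $x,y$, and let $D$ be diagonal with $D\succ H$. Assume additionally that $f$ is $s$-restricted strongly convex. Let $(x_k)$ be a sequence generated by the IWHT method with $D$. Then the entire sequence $(x_k)$ converges.
   Context: $\|z\|_A^2=z^TAz$. $C_s=\{x\in\mathbb{R}^n:\|x\|_0\le s\}$ for a positive integer $s$, where $\|x\|_0$ is the number of nonzero entries. $\mathcal{P}_{C_s}(z)=\operatorname{argmin}_{y\in C_s}\|y-z\|_2^2$ (set-valued). IWHT with diagonal $D\succ0$: start from $x_0\in C_s$, pick $y_{k+1}\in\mathcal{P}_{C_s}\big(D^{1/2}x_k-D^{-1/2}\nabla f(x_k)\big)$ and set $x_{k+1}=D^{-1/2}y_{k+1}$. $f$ is $s$-restricted strongly convex if there is $\sigma_s>0$ with $f(y)\ge f(x)+\nabla f(x)^T(y-x)+\frac{\sigma_s}{2}\|x-y\|_2^2$ for all $x,y$ with $\|x-y\|_0\le s$. *)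

theory Defs
  imports "HOL-Analysis.Analysis"
begin

definition is_diag :: "real^'n^'n \<Rightarrow> bool" where
  "is_diag A \<longleftrightarrow> (\<forall>i j. i \<noteq> j \<longrightarrow> A $ i $ j = 0)"

definition pos_def :: "real^'n^'n \<Rightarrow> bool" where
  "pos_def A \<longleftrightarrow> (\<forall>z. z \<noteq> 0 \<longrightarrow> z \<bullet> (A *v z) > 0)"

definition wnorm2 :: "real^'n^'n \<Rightarrow> real^'n \<Rightarrow> real" where
  "wnorm2 A z = z \<bullet> (A *v z)"

definition diag_sqrt :: "real^'n^'n \<Rightarrow> real^'n^'n" where
  "diag_sqrt D = (\<chi> i j. if i = j then sqrt (D $ i $ i) else 0)"

definition diag_inv_sqrt :: "real^'n^'n \<Rightarrow> real^'n^'n" where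
  "diag_inv_sqrt D = (\<chi> i j. if i = j then 1 / sqrt (D $ i $ i) else 0)"

definition l0 :: "real^'n \<Rightarrow> nat" where
  "l0 x = card {i. x $ i \<noteq> 0}"

definition sparse_set :: "nat \<Rightarrow> (real^'n) set" where
  "sparse_set s = {x. l0 x \<le> s}"

definition proj_set :: "(real^'n) set \<Rightarrow> real^'n \<Rightarrow> (real^'n) set" where
  "proj_set S z = {y \<in> S. \<forall>y'\<in>S. (norm (y - z))\<^sup>2 \<le> (norm (y' - z))\<^sup>2}"

definition restricted_strongly_convex ::
    "nat \<Rightarrow> (real^'n \<Rightarrow> real) \<Rightarrow> (real^'n \<Rightarrow> real^'n) \<Rightarrow> bool" where
  "restricted_strongly_convex s f grad \<longleftrightarrow>
     (\<exists>\<sigma>>0. \<forall>x y. l0 (x - y) \<le> s \<longrightarrow>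
        f y \<ge> f x + grad x \<bullet> (y - x) + \<sigma> / 2 * (norm (x - y))\<^sup>2)"

definition iwht_seq ::
    "nat \<Rightarrow> (real^'n \<Rightarrow> real^'n) \<Rightarrow> real^'n^'n \<Rightarrow> (nat \<Rightarrow> real^'n) \<Rightarrow> bool" where
  "iwht_seq s grad D x \<longleftrightarrow>
     x 0 \<in> sparse_set s \<and>
     (\<forall>k. \<exists>y. y \<in> proj_set (sparse_set s)
                   (diag_sqrt D *v x k - diag_inv_sqrt D *v grad (x k))
              \<and> x (Suc k) = diag_inv_sqrt D *v y)"

end

theory Submission imports Defs begin

lemma diag_mult: "(\<chi> i j. if i = j then c i else 0) *v v = (\<chi> i. c i * v $ i)"
proof -
  have "(\<Sum>j\<in>UNIV. (if i = j then c i else 0) * v $ j) = c i * v $ i" for i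
  proof -
    have "(\<Sum>j\<in>UNIV. (if i = j then c i else 0) * v $ j) = (\<Sum>j\<in>UNIV. if i = j then c i * v $ i else 0)"
      by (intro sum.cong) auto
    then show ?thesis by simp
  qed
  then show ?thesis by (simp add: matrix_vector_mult_def vec_eq_iff)
qed

lemma diag_mult2: "is_diag A \<Longrightarrow> A *v v = (\<chi> i. A $ i $ i * v $ i)"
proof -
  assume d: "is_diag A"
  have "(\<Sum>j\<in>UNIV. A $ i $ j * v $ j) = A $ i $ i * v $ i" for i
  proof -
    have "(\<Sum>j\<in>UNIV. A $ i $ j * v $ j) = (\<Sum>j\<in>UNIV. if j = i then A $ i $ i * v $ i else 0)"
      using d unfolding is_diag_def by (intro sum.cong) auto
    then show ?thesis by simp
  qed
  then show ?thesis by (simp add: matrix_vector_mult_def vec_eq_iff)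
qed

lemma wnorm2_diag: "is_diag A \<Longrightarrow> wnorm2 A v = (\<Sum>i\<in>UNIV. A $ i $ i * (v $ i)^2)"
  by (simp add: wnorm2_def diag_mult2 inner_vec_def power2_eq_square algebra_simps)

lemma norm2_sum: "(norm (v::real^'n))^2 = (\<Sum>i\<in>UNIV. (v $ i)^2)"
proof -
  have "(norm v)^2 = v \<bullet> v" by (simp add: dot_square_norm)
  then show ?thesis by (simp add: inner_vec_def power2_eq_square)
qed

lemma inner_sum: "(u::real^'n) \<bullet> v = (\<Sum>i\<in>UNIV. u $ i * v $ i)"
  by (simp add: inner_vec_def)

lemma l0_mono: "{i. y $ i \<noteq> 0} \<subseteq> {i. x $ i \<noteq> 0} \<Longrightarrow> l0 y \<le> l0 x"
  unfolding l0_def by (rule card_mono) auto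

lemma sq_id: "(d::real) > 0 \<Longrightarrow> (sqrt d * w - (sqrt d * v - g / sqrt d))^2 = 2*g*(w-v) + d*(w-v)^2 + g^2/d"
proof -
  assume d: "d > 0"
  have s: "sqrt d * sqrt d = d" using d by simp
  have sp: "sqrt d > 0" using d by simp
  have "sqrt d * w - (sqrt d * v - g / sqrt d) = (d * (w - v) + g) / sqrt d"
    using sp s by (simp add: field_simps)
  then have "(sqrt d * w - (sqrt d * v - g / sqrt d))^2 = (d * (w - v) + g)^2 / d"
    using s by (simp add: power_divide power2_eq_square)
  also have "\<dots> = 2*g*(w-v) + d*(w-v)^2 + g^2/d"
    using d by (simp add: field_simps power2_eq_square)
  finally show ?thesis .
qed

lemma step_lemma:
  fixes D :: "real^'n^'n"
  assumes dpos: "\<And>i. D$i$i > 0"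
    and y: "y \<in> proj_set (sparse_set s) (diag_sqrt D *v v - diag_inv_sqrt D *v g)"
    and u: "u = diag_inv_sqrt D *v y"
  shows "u \<in> sparse_set s"
    and "\<And>z. z \<in> sparse_set s \<Longrightarrow> (\<Sum>i\<in>UNIV. 2*g$i*(u$i - v$i) + D$i$i*(u$i - v$i)^2)
           \<le> (\<Sum>i\<in>UNIV. 2*g$i*(z$i - v$i) + D$i$i*(z$i - v$i)^2)"
proof -
  have sq: "\<And>w. diag_sqrt D *v w = (\<chi> i. sqrt (D$i$i) * w $ i)"
    unfolding diag_sqrt_def by (rule diag_mult)
  have isq: "\<And>w. diag_inv_sqrt D *v w = (\<chi> i. 1 / sqrt (D$i$i) * w $ i)"
    unfolding diag_inv_sqrt_def by (rule diag_mult)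
  have spos: "\<And>i. sqrt (D$i$i) > 0" using dpos by simp
  have supp_sq: "{i. (diag_sqrt D *v w) $ i \<noteq> 0} = {i. w $ i \<noteq> 0}" for w
    using dpos by (auto simp: sq) (metis less_irrefl)
  have ui: "u $ i = y $ i / sqrt (D$i$i)" for i using u by (simp add: isq)
  have yu: "y = diag_sqrt D *v u"
    using dpos by (simp add: vec_eq_iff sq ui) (metis less_irrefl)
  have yS: "y \<in> sparse_set s" and yopt: "\<And>y'. y' \<in> sparse_set s \<Longrightarrow> (norm (y - (diag_sqrt D *v v - diag_inv_sqrt D *v g)))\<^sup>2 \<le> (norm (y' - (diag_sqrt D *v v - diag_inv_sqrt D *v g)))\<^sup>2"
    using y unfolding proj_set_def by auto
  have "{i. u $ i \<noteq> 0} = {i. y $ i \<noteq> 0}" using yu supp_sq by simp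
  then show "u \<in> sparse_set s" using yS unfolding sparse_set_def l0_def by simp
  have key: "(norm (diag_sqrt D *v w - (diag_sqrt D *v v - diag_inv_sqrt D *v g)))\<^sup>2
     = (\<Sum>i\<in>UNIV. 2*g$i*(w$i - v$i) + D$i$i*(w$i - v$i)^2) + (\<Sum>i\<in>UNIV. (g$i)^2 / D$i$i)" for w
  proof -
    have "(norm (diag_sqrt D *v w - (diag_sqrt D *v v - diag_inv_sqrt D *v g)))\<^sup>2
       = (\<Sum>i\<in>UNIV. (sqrt (D$i$i) * w$i - (sqrt (D$i$i) * v$i - g$i / sqrt (D$i$i)))^2)"
      by (simp add: norm2_sum sq isq)
    also have "\<dots> = (\<Sum>i\<in>UNIV. 2*g$i*(w$i - v$i) + D$i$i*(w$i - v$i)^2 + (g$i)^2 / D$i$i)"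
      using sq_id dpos by simp
    also have "\<dots> = (\<Sum>i\<in>UNIV. 2*g$i*(w$i - v$i) + D$i$i*(w$i - v$i)^2) + (\<Sum>i\<in>UNIV. (g$i)^2 / D$i$i)"
      by (simp add: sum.distrib)
    finally show ?thesis .
  qed
  fix z :: "real^'n" assume zS: "z \<in> sparse_set s"
  have "diag_sqrt D *v z \<in> sparse_set s"
    using zS supp_sq[of z] unfolding sparse_set_def l0_def by simp
  from yopt[OF this] show "(\<Sum>i\<in>UNIV. 2*g$i*(u$i - v$i) + D$i$i*(u$i - v$i)^2)
           \<le> (\<Sum>i\<in>UNIV. 2*g$i*(z$i - v$i) + D$i$i*(z$i - v$i)^2)"
    unfolding yu key by simp
qed

lemma stat_lemma:
  fixes D :: "real^'n^'n" and u v g :: "real^'n"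
  assumes dpos: "\<And>i. D$i$i > 0"
    and opt: "\<And>z. z \<in> sparse_set s \<Longrightarrow> (\<Sum>i\<in>UNIV. 2*g$i*(u$i - v$i) + D$i$i*(u$i - v$i)^2)
           \<le> (\<Sum>i\<in>UNIV. 2*g$i*(z$i - v$i) + D$i$i*(z$i - v$i)^2)"
    and uS: "u \<in> sparse_set s" and ui: "u $ i \<noteq> 0"
  shows "g$i + D$i$i*(u$i - v$i) = 0"
proof -
  define d where "d = D$i$i"
  define a where "a = u$i - v$i"
  define c where "c = g$i + d * a"
  define t where "t = - c / d"
  have d: "d > 0" using dpos d_def by simp
  define z where "z = (\<chi> j. if j = i then u$j + t else u$j)"
  have "{j. z $ j \<noteq> 0} \<subseteq> {j. u $ j \<noteq> 0}" using ui by (auto simp: z_def split: if_splits)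
  then have "l0 z \<le> l0 u" by (rule l0_mono)
  then have zS: "z \<in> sparse_set s" using uS by (simp add: sparse_set_def)
  define F where "F w j = 2*g$j*(w$j - v$j) + D$j$j*(w$j - v$j)^2" for w :: "real^'n" and j
  have rest: "(\<Sum>j\<in>UNIV-{i}. F z j) = (\<Sum>j\<in>UNIV-{i}. F u j)"
    by (intro sum.cong) (auto simp: F_def z_def)
  have "(\<Sum>j\<in>UNIV. F u j) \<le> (\<Sum>j\<in>UNIV. F z j)" using opt[OF zS] by (simp add: F_def)
  then have "F u i + (\<Sum>j\<in>UNIV-{i}. F u j) \<le> F z i + (\<Sum>j\<in>UNIV-{i}. F z j)"
    by (simp add: sum.remove[of UNIV i])
  then have "F u i \<le> F z i" using rest by simp
  then have le: "2*g$i*a + d*a^2 \<le> 2*g$i*(a+t) + d*(a+t)^2"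
    by (simp add: F_def z_def a_def d_def algebra_simps)
  have "2*g$i*(a+t) + d*(a+t)^2 - (2*g$i*a + d*a^2) = -(c^2/d)"
    using d by (simp add: t_def c_def field_simps power2_eq_square)
  with le have "c^2/d \<le> 0" by linarith
  then have "c^2 \<le> 0" using d by (simp add: divide_le_0_iff)
  then have "c = 0" by simp
  then show ?thesis by (simp add: c_def d_def a_def)
qed

lemma conv_finite_cluster:
  fixes x :: "nat \<Rightarrow> 'a::{heine_borel,real_normed_vector}"
  assumes bnd: "bounded (range x)" and fin: "finite A"
    and step: "(\<lambda>k. x (Suc k) - x k) \<longlonglongrightarrow> 0"
    and clus: "\<And>p r. strict_mono r \<Longrightarrow> (x \<circ> r) \<longlonglongrightarrow> p \<Longrightarrow> p \<in> A"
  shows "convergent x"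
proof -
  have near: "eventually (\<lambda>k. \<exists>a\<in>A. dist (x k) a < \<rho>) sequentially" if \<rho>: "\<rho> > 0" for \<rho>
  proof (rule ccontr)
    assume "\<not> eventually (\<lambda>k. \<exists>a\<in>A. dist (x k) a < \<rho>) sequentially"
    then have "frequently (\<lambda>k. \<not> (\<exists>a\<in>A. dist (x k) a < \<rho>)) sequentially"
      by (simp only: not_eventually)
    then have "frequently (\<lambda>k. \<not> (\<exists>a\<in>A. dist (x k) a < \<rho>)) cofinite"
      by (simp only: cofinite_eq_sequentially)
    then have inf: "infinite {k. \<not> (\<exists>a\<in>A. dist (x k) a < \<rho>)}"
      using frequently_cofinite by blast
    then obtain r :: "nat \<Rightarrow> nat" where r: "strict_mono r" "\<And>n. r n \<in> {k. \<not> (\<exists>a\<in>A. dist (x k) a < \<rho>)}"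
      using infinite_enumerate[OF \<open>infinite {k. \<not> (\<exists>a\<in>A. dist (x k) a < \<rho>)}\<close>] by blast
    have "bounded (range (x \<circ> r))" using bnd by (rule bounded_subset) auto
    then obtain l and r' :: "nat \<Rightarrow> nat" where r': "strict_mono r'" "((x \<circ> r) \<circ> r') \<longlonglongrightarrow> l"
      using bounded_imp_convergent_subsequence[OF \<open>bounded (range (x \<circ> r))\<close>] by metis
    have "x \<circ> (r \<circ> r') = (x \<circ> r) \<circ> r'" by (simp add: o_assoc)
    then have lA: "l \<in> A" using clus[of "r \<circ> r'" l] r' r strict_mono_o by metis
    from r'(2) \<rho> have "eventually (\<lambda>n. dist (((x \<circ> r) \<circ> r') n) l < \<rho>) sequentially"
      by (simp add: tendsto_iff)
    then obtain N where "dist (((x \<circ> r) \<circ> r') N) l < \<rho>"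
      by (auto simp: eventually_sequentially)
    with r(2)[of "r' N"] lA show False by auto
  qed
  have "A \<noteq> {}" using near[of 1] by auto
  obtain \<delta> where \<delta>: "\<delta> > 0" and sep: "\<And>a b. a \<in> A \<Longrightarrow> b \<in> A \<Longrightarrow> a \<noteq> b \<Longrightarrow> \<delta> \<le> dist a b"
  proof -
    have "\<forall>a\<in>A. \<exists>d>0. \<forall>b\<in>A. b \<noteq> a \<longrightarrow> d \<le> dist a b"
      using finite_set_avoid[OF fin] by blast
    then obtain d where d: "\<And>a. a \<in> A \<Longrightarrow> d a > 0 \<and> (\<forall>b\<in>A. b \<noteq> a \<longrightarrow> d a \<le> dist a b)"
      by metis
    define \<delta> where "\<delta> = Min (insert 1 (d ` A))"
    have "\<delta> > 0" unfolding \<delta>_def using fin d by (subst Min_gr_iff) auto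
    moreover have "\<delta> \<le> dist a b" if "a \<in> A" "b \<in> A" "a \<noteq> b" for a b
    proof -
      have "\<delta> \<le> d a" unfolding \<delta>_def using fin that by (intro Min_le) auto
      also have "d a \<le> dist a b" using d[OF that(1)] that by auto
      finally show ?thesis .
    qed
    ultimately show ?thesis using that by blast
  qed
  have stepe: "eventually (\<lambda>k. dist (x (Suc k)) (x k) < e) sequentially" if "e > 0" for e
    using step that by (simp add: tendsto_iff dist_norm)
  have "eventually (\<lambda>k. (\<exists>a\<in>A. dist (x k) a < \<delta>/4) \<and> dist (x (Suc k)) (x k) < \<delta>/4) sequentially"
    using near[of "\<delta>/4"] stepe[of "\<delta>/4"] \<delta> by (simp add: eventually_conj)
  then obtain N where N: "\<And>k. k \<ge> N \<Longrightarrow> (\<exists>a\<in>A. dist (x k) a < \<delta>/4) \<and> dist (x (Suc k)) (x k) < \<delta>/4"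
    by (auto simp: eventually_sequentially)
  obtain a where aA: "a \<in> A" and a: "dist (x N) a < \<delta>/4" using N[of N] by auto
  have stay: "dist (x k) a < \<delta>/4" if "k \<ge> N" for k
    using that
  proof (induction k rule: dec_induct)
    case base then show ?case using a .
  next
    case (step k)
    obtain b where bA: "b \<in> A" and b: "dist (x (Suc k)) b < \<delta>/4" using N[of "Suc k"] step by auto
    have "dist a b \<le> dist a (x k) + dist (x k) (x (Suc k)) + dist (x (Suc k)) b"
      using dist_triangle[of a "x (Suc k)" "x k"] dist_triangle[of a b "x (Suc k)"] by linarith
    also have "\<dots> < \<delta>"
    proof -
      have h1: "dist a (x k) < \<delta>/4" using step by (simp add: dist_commute)
      have h2: "dist (x k) (x (Suc k)) < \<delta>/4" using N[of k] step by (simp add: dist_commute)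
      show ?thesis using h1 h2 b \<delta> by linarith
    qed
    finally have "a = b" using sep[OF aA bA] by force
    then show ?case using b by simp
  qed
  have "x \<longlonglongrightarrow> a"
  proof (rule tendstoI)
    fix e :: real assume e: "e > 0"
    have "eventually (\<lambda>k. (\<exists>b\<in>A. dist (x k) b < min e (\<delta>/4)) \<and> k \<ge> N) sequentially"
      using near[of "min e (\<delta>/4)"] e \<delta> eventually_ge_at_top[of N] by (simp add: eventually_conj)
    then show "eventually (\<lambda>k. dist (x k) a < e) sequentially"
    proof (rule eventually_mono)
      fix k assume "(\<exists>b\<in>A. dist (x k) b < min e (\<delta>/4)) \<and> k \<ge> N"
      then obtain b where bA: "b \<in> A" and b: "dist (x k) b < min e (\<delta>/4)" and k: "k \<ge> N" by auto
      have "dist a b \<le> dist a (x k) + dist (x k) b" by (rule dist_triangle)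
      also have "\<dots> < \<delta>" using stay[OF k] b \<delta> by (simp add: dist_commute)
      finally have "a = b" using sep[OF aA bA] by force
      then show "dist (x k) a < e" using b by simp
    qed
  qed
  then show ?thesis by (auto simp: convergent_def)
qed

theorem proposition4p7:
  fixes f :: "real^'n \<Rightarrow> real"
    and grad :: "real^'n \<Rightarrow> real^'n"
    and H D :: "real^'n^'n"
    and s :: nat
    and x :: "nat \<Rightarrow> real^'n"
  assumes grad: "\<And>z. (f has_derivative (\<lambda>h. grad z \<bullet> h)) (at z)"
    and grad_cont: "continuous_on UNIV grad"
    and cvx: "convex_on UNIV f"
    and H_diag: "is_diag H" and H_nonneg: "\<And>i. H $ i $ i \<ge> 0"
    and upper: "\<And>u v. f v \<le> f u + grad u \<bullet> (v - u) + 1/2 * wnorm2 H (v - u)"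
    and D_diag: "is_diag D" and D_H: "pos_def (D - H)"
    and s_pos: "s \<ge> 1"
    and rsc: "restricted_strongly_convex s f grad"
    and iter: "iwht_seq s grad D x"
  shows "convergent x"
proof -
  obtain \<sigma> where \<sigma>: "\<sigma> > 0" and rs: "\<And>u v. l0 (u - v) \<le> s \<Longrightarrow>
        f v \<ge> f u + grad u \<bullet> (v - u) + \<sigma> / 2 * (norm (u - v))\<^sup>2"
    using rsc unfolding restricted_strongly_convex_def by blast
  have DH: "H$i$i < D$i$i" for i
  proof -
    have dg: "is_diag (D - H)" using D_diag H_diag by (simp add: is_diag_def)
    have "axis i (1::real) \<noteq> 0" by (simp add: vec_eq_iff axis_def)
    then have "0 < wnorm2 (D - H) (axis i 1)" using D_H by (simp add: pos_def_def wnorm2_def)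
    also have "wnorm2 (D - H) (axis i 1) = (\<Sum>j\<in>UNIV. if j = i then (D - H)$i$i else 0)"
      unfolding wnorm2_diag[OF dg] by (intro sum.cong) (auto simp: axis_def)
    finally show ?thesis by simp
  qed
  have dpos: "D$i$i > 0" for i using DH[of i] H_nonneg[of i] by linarith
  obtain Y where Y: "\<And>k. Y k \<in> proj_set (sparse_set s) (diag_sqrt D *v x k - diag_inv_sqrt D *v grad (x k))
        \<and> x (Suc k) = diag_inv_sqrt D *v Y k"
    using iter unfolding iwht_seq_def by metis
  have xS: "x k \<in> sparse_set s" for k
  proof (cases k)
    case 0 then show ?thesis using iter by (simp add: iwht_seq_def)
  next
    case (Suc j) then show ?thesis using step_lemma(1)[OF dpos conjunct1[OF Y[of j]] conjunct2[OF Y[of j]]] by simp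
  qed
  define Phi where "Phi k z = (\<Sum>i\<in>UNIV. 2*grad (x k)$i*(z$i - x k$i) + D$i$i*(z$i - x k$i)^2)" for k z
  have opt: "Phi k (x (Suc k)) \<le> Phi k z" if "z \<in> sparse_set s" for k z
    unfolding Phi_def using step_lemma(2)[OF dpos conjunct1[OF Y[of k]] conjunct2[OF Y[of k]] that] .
  have stat: "grad (x k)$i + D$i$i*(x (Suc k)$i - x k$i) = 0" if "x (Suc k) $ i \<noteq> 0" for k i
    using stat_lemma[OF dpos _ xS[of "Suc k"] that, where v="x k" and g="grad (x k)"] opt[of _ k] unfolding Phi_def by blast
  define m where "m = Min (range (\<lambda>i. D$i$i - H$i$i))"
  have m: "m > 0" unfolding m_def using DH by (subst Min_gr_iff) auto
  have mle: "m \<le> D$i$i - H$i$i" for i unfolding m_def by (rule Min_le) auto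
  have desc: "f (x (Suc k)) \<le> f (x k) - m/2 * (norm (x (Suc k) - x k))^2" for k
  proof -
    define a where "a = x (Suc k) - x k"
    have "Phi k (x (Suc k)) \<le> Phi k (x k)" using opt xS by blast
    also have "Phi k (x k) = 0" by (simp add: Phi_def)
    finally have "Phi k (x (Suc k)) \<le> 0" .
    moreover have "Phi k (x (Suc k)) = 2 * (grad (x k) \<bullet> a) + (\<Sum>i\<in>UNIV. D$i$i * (a$i)^2)"
      by (simp add: Phi_def a_def inner_sum sum.distrib sum_distrib_left mult.assoc)
    ultimately have g: "grad (x k) \<bullet> a \<le> - 1/2 * (\<Sum>i\<in>UNIV. D$i$i * (a$i)^2)" by linarith
    have "f (x (Suc k)) \<le> f (x k) + grad (x k) \<bullet> a + 1/2 * (\<Sum>i\<in>UNIV. H$i$i * (a$i)^2)"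
      using upper[where u="x k" and v="x (Suc k)"] by (simp add: a_def wnorm2_diag[OF H_diag])
    also have "\<dots> \<le> f (x k) - 1/2 * ((\<Sum>i\<in>UNIV. D$i$i * (a$i)^2) - (\<Sum>i\<in>UNIV. H$i$i * (a$i)^2))"
      using g by (simp add: algebra_simps)
    also have "(\<Sum>i\<in>UNIV. D$i$i * (a$i)^2) - (\<Sum>i\<in>UNIV. H$i$i * (a$i)^2) = (\<Sum>i\<in>UNIV. (D$i$i - H$i$i) * (a$i)^2)"
      by (simp add: sum_subtractf left_diff_distrib)
    finally have f1: "f (x (Suc k)) \<le> f (x k) - 1/2 * (\<Sum>i\<in>UNIV. (D$i$i - H$i$i) * (a$i)^2)" .
    have mono: "(\<Sum>i\<in>UNIV. (D$i$i - H$i$i) * (a$i)^2) \<ge> (\<Sum>i\<in>UNIV. m * (a$i)^2)"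
      using mle by (intro sum_mono mult_right_mono) auto
    have S: "(\<Sum>i\<in>UNIV. m * (a$i)^2) = m * (norm a)^2" by (simp add: norm2_sum sum_distrib_left)
    have "f (x (Suc k)) \<le> f (x k) - m/2 * (norm a)^2" using f1 mono S by linarith
    then show ?thesis by (simp add: a_def)
  qed
  have dec1: "f (x (Suc k)) \<le> f (x k)" for k
  proof -
    have "m/2 * (norm (x (Suc k) - x k))^2 \<ge> 0" using m by simp
    then show ?thesis using desc[of k] by linarith
  qed
  have decf: "decseq (\<lambda>k. f (x k))" using dec1 by (rule decseq_SucI)
  have fx0: "f (x k) \<le> f (x 0)" for k
  proof (induction k)
    case 0 show ?case by simp
  next
    case (Suc k) then show ?case using dec1[of k] by linarith
  qed
  define G where "G = norm (grad 0)"
  define C where "C = f (x 0) - f 0"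
  have lowz: "f z \<ge> f 0 - G * norm z + \<sigma>/2 * (norm z)^2" if "z \<in> sparse_set s" for z
  proof -
    have "{i. (0 - z) $ i \<noteq> 0} = {i. z $ i \<noteq> 0}" by auto
    then have "l0 (0 - z) \<le> s" using that by (simp add: sparse_set_def l0_def)
    from rs[OF this] have "f z \<ge> f 0 + grad 0 \<bullet> z + \<sigma>/2 * (norm z)^2" by simp
    moreover have "grad 0 \<bullet> z \<ge> - (G * norm z)"
      using norm_cauchy_schwarz[of "- grad 0" z] by (simp add: G_def)
    ultimately show ?thesis by linarith
  qed
  define R where "R = 2 * (G + \<bar>C\<bar>) / \<sigma> + 1"
  have G0: "G \<ge> 0" by (simp add: G_def)
  have bndx: "norm (x k) \<le> R" for k
  proof (rule ccontr)
    define t where "t = norm (x k)"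
    assume "\<not> norm (x k) \<le> R"
    then have t: "t > R" by (simp add: t_def)
    have R1: "R \<ge> 1" unfolding R_def using G0 \<sigma> by simp
    have t1: "t \<ge> 1" using t R1 by linarith
    have eqR: "\<sigma> * R / 2 = G + \<bar>C\<bar> + \<sigma>/2" unfolding R_def using \<sigma> by (simp add: field_simps)
    have "\<sigma> * R < \<sigma> * t" using t \<sigma> by (intro mult_strict_left_mono) auto
    then have h1: "\<sigma> * t / 2 - G > \<bar>C\<bar>" using eqR \<sigma> by linarith
    have h0: "\<sigma> * t / 2 - G \<ge> 0" using h1 abs_ge_zero[of C] by linarith
    have h2: "t * (\<sigma> * t / 2 - G) \<ge> (\<sigma> * t / 2 - G)"
      using mult_right_mono[OF t1 h0] by simp
    have eq: "t * (\<sigma> * t / 2 - G) = \<sigma>/2 * t^2 - G * t" by (simp add: power2_eq_square algebra_simps)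
    have h3: "\<sigma>/2 * t^2 - G * t > C" using h1 h2 eq abs_ge_self[of C] by linarith
    have "f (x k) \<ge> f 0 - G * t + \<sigma>/2 * t^2" using lowz[OF xS[of k]] by (simp add: t_def)
    then show False using fx0[of k] h3 unfolding C_def by linarith
  qed
  have lowf: "f 0 - G * R \<le> f (x k)" for k
  proof -
    have "f (x k) \<ge> f 0 - G * norm (x k) + \<sigma>/2 * (norm (x k))^2" using lowz[OF xS[of k]] .
    moreover have "G * norm (x k) \<le> G * R" using bndx[of k] G0 by (rule mult_left_mono)
    moreover have "\<sigma>/2 * (norm (x k))^2 \<ge> 0" using \<sigma> by simp
    ultimately show ?thesis by linarith
  qed
  obtain L where L: "(\<lambda>k. f (x k)) \<longlonglongrightarrow> L" using decseq_convergent[OF decf] lowf by blast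
  have "(\<lambda>k. f (x k) - f (x (Suc k))) \<longlonglongrightarrow> L - L"
    using L LIMSEQ_Suc[OF L] by (rule tendsto_diff)
  then have fd: "(\<lambda>k. f (x k) - f (x (Suc k))) \<longlonglongrightarrow> 0" by simp
  have step: "(\<lambda>k. x (Suc k) - x k) \<longlonglongrightarrow> 0"
  proof (rule LIMSEQ_I)
    fix r :: real assume r: "r > 0"
    then have "m/2 * r^2 > 0" using m by simp
    from LIMSEQ_D[OF fd this] obtain N where N: "\<And>n. n \<ge> N \<Longrightarrow> norm (f (x n) - f (x (Suc n)) - 0) < m/2 * r^2" by blast
    show "\<exists>N. \<forall>n\<ge>N. norm (x (Suc n) - x n - 0) < r"
    proof (intro exI allI impI)
      fix n assume n: "n \<ge> N"
      have a1: "f (x n) - f (x (Suc n)) < m/2 * r^2" using N[OF n] abs_ge_self[of "f (x n) - f (x (Suc n))"] by simp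
      have "m/2 * (norm (x (Suc n) - x n))^2 < m/2 * r^2" using a1 desc[of n] by linarith
      then have "(norm (x (Suc n) - x n))^2 < r^2" using m by simp
      then show "norm (x (Suc n) - x n - 0) < r" using r by (simp add: power_less_imp_less_base)
    qed
  qed
  define A where "A = {p :: real^'n. l0 p \<le> s \<and> (\<forall>i. p$i \<noteq> 0 \<longrightarrow> grad p $ i = 0)}"
  have clus: "p \<in> A" if r: "strict_mono r" and p: "(x \<circ> r) \<longlonglongrightarrow> p" for p r
  proof -
    have "((\<lambda>k. x (Suc k) - x k) \<circ> r) \<longlonglongrightarrow> 0" using LIMSEQ_subseq_LIMSEQ[OF step r] .
    then have "(\<lambda>j. x (r j) + (x (Suc (r j)) - x (r j))) \<longlonglongrightarrow> p + 0"
      using p by (intro tendsto_add) (auto simp: o_def)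
    then have pS: "(\<lambda>j. x (Suc (r j))) \<longlonglongrightarrow> p" by simp
    have p': "(\<lambda>j. x (r j)) \<longlonglongrightarrow> p" using p by (simp add: o_def)
    have ev: "eventually (\<lambda>j. \<forall>i. p $ i \<noteq> 0 \<longrightarrow> x (r j) $ i \<noteq> 0) sequentially"
    proof (rule eventually_all_finite)
      fix i show "eventually (\<lambda>j. p $ i \<noteq> 0 \<longrightarrow> x (r j) $ i \<noteq> 0) sequentially"
      proof (cases "p $ i = 0")
        case True then show ?thesis by simp
      next
        case False
        have "eventually (\<lambda>j. x (r j) $ i \<noteq> 0) sequentially"
          using tendsto_imp_eventually_ne[OF tendsto_vec_nth[OF p'] False] .
        then show ?thesis by (rule eventually_mono) simp
      qed
    qed
    then obtain j where "\<forall>i. p $ i \<noteq> 0 \<longrightarrow> x (r j) $ i \<noteq> 0" by (auto simp: eventually_sequentially)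
    then have "l0 p \<le> l0 (x (r j))" by (intro l0_mono) auto
    then have l0p: "l0 p \<le> s" using xS[of "r j"] by (simp add: sparse_set_def)
    have gz: "grad p $ i = 0" if pi: "p $ i \<noteq> 0" for i
    proof -
      have e2: "eventually (\<lambda>j. x (Suc (r j)) $ i \<noteq> 0) sequentially"
        using tendsto_imp_eventually_ne[OF tendsto_vec_nth[OF pS] pi] .
      have gl: "(\<lambda>j. grad (x (r j)) $ i) \<longlonglongrightarrow> grad p $ i"
        by (intro tendsto_vec_nth continuous_on_tendsto_compose[OF grad_cont p']) auto
      have "(\<lambda>j. - (D$i$i * (x (Suc (r j)) $ i - x (r j) $ i))) \<longlonglongrightarrow> - (D$i$i * (p $ i - p $ i))"
        by (intro tendsto_intros tendsto_vec_nth pS p')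
      then have z: "(\<lambda>j. - (D$i$i * (x (Suc (r j)) $ i - x (r j) $ i))) \<longlonglongrightarrow> 0" by simp
      have "eventually (\<lambda>j. - (D$i$i * (x (Suc (r j)) $ i - x (r j) $ i)) = grad (x (r j)) $ i) sequentially"
        using e2 by (rule eventually_mono) (use stat in force)
      with z have "(\<lambda>j. grad (x (r j)) $ i) \<longlonglongrightarrow> 0" by (rule Lim_transform_eventually)
      with gl show ?thesis using LIMSEQ_unique by blast
    qed
    show ?thesis unfolding A_def using l0p gz by blast
  qed
  have finA: "finite A"
  proof (rule inj_on_finite[where f = "\<lambda>p. {i. p $ i \<noteq> 0}" and B = UNIV])
    show "inj_on (\<lambda>p. {i. p $ i \<noteq> 0}) A"
    proof (rule inj_onI)
      fix p q assume pA: "p \<in> A" and qA: "q \<in> A" and eq: "{i. p $ i \<noteq> 0} = {i. q $ i \<noteq> 0}"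
      have eqi: "p $ i = 0 \<longleftrightarrow> q $ i = 0" for i
        using eq unfolding set_eq_iff by blast
      have gp: "grad p $ i = 0" if "p $ i \<noteq> 0" for i using pA that unfolding A_def by blast
      have gq: "grad q $ i = 0" if "q $ i \<noteq> 0" for i using qA that unfolding A_def by blast
      have lp: "l0 p \<le> s" using pA unfolding A_def by blast
      have s1: "{i. (p - q) $ i \<noteq> 0} \<subseteq> {i. p $ i \<noteq> 0}"
      proof
        fix i assume "i \<in> {i. (p - q) $ i \<noteq> 0}"
        then have "(p - q) $ i \<noteq> 0" by simp
        then show "i \<in> {i. p $ i \<noteq> 0}" using eqi[of i] by auto
      qed
      have l1: "l0 (p - q) \<le> s" using l0_mono[OF s1] lp by linarith
      have s2: "{i. (q - p) $ i \<noteq> 0} \<subseteq> {i. p $ i \<noteq> 0}"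
      proof
        fix i assume "i \<in> {i. (q - p) $ i \<noteq> 0}"
        then have "(q - p) $ i \<noteq> 0" by simp
        then show "i \<in> {i. p $ i \<noteq> 0}" using eqi[of i] by auto
      qed
      have l2: "l0 (q - p) \<le> s" using l0_mono[OF s2] lp by linarith
      have t1: "grad p $ i * (q - p) $ i = 0" for i
        using gp[of i] eqi[of i] by (cases "p $ i = 0") auto
      have t2: "grad q $ i * (p - q) $ i = 0" for i
        using gq[of i] eqi[of i] by (cases "q $ i = 0") auto
      have i1: "grad p \<bullet> (q - p) = 0" unfolding inner_sum using t1 by (intro sum.neutral) blast
      have i2: "grad q \<bullet> (p - q) = 0" unfolding inner_sum using t2 by (intro sum.neutral) blast
      have "f q \<ge> f p + \<sigma>/2 * (norm (p - q))^2" using rs[OF l1] i1 by simp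
      moreover have "f p \<ge> f q + \<sigma>/2 * (norm (q - p))^2" using rs[OF l2] i2 by simp
      moreover have "(norm (q - p))^2 = (norm (p - q))^2" by (simp add: norm_minus_commute)
      ultimately have "\<sigma>/2 * (norm (p - q))^2 + \<sigma>/2 * (norm (p - q))^2 \<le> 0" by simp
      then have "\<sigma> * (norm (p - q))^2 \<le> 0" by simp
      then have "(norm (p - q))^2 \<le> 0" using \<sigma> by (simp add: mult_le_0_iff)
      then show "p = q" by simp
    qed
  qed auto
  have bnd: "bounded (range x)" using bndx by (intro boundedI) auto
  show ?thesis using conv_finite_cluster[OF bnd finA step] clus by blast
qed

end
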